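(* Let $\alpha$ be a countably infinite order type and $S$ a sierpinskisation of $\alpha$ and $\omega$. Assume $\alpha=\omega\alpha'+n$ where $n<\omega$. Then there is a subset of $S$ which (with the induced order) is the direct sum $S'\oplus F$ of a sierpinskisation $S'$ of $\omega\alpha'$ and $\omega$ with an $n$-element poset $F$.
   Context: A sierpinskisation of a countable order type $\beta$ and $\omega$ is a poset whose order is the intersection of two linear orders on its underlying set, one of type $\beta$ and one of type $\omega$. $\omega\alpha'$ denotes the ordered sum of $\alpha'$ copies of the chain $\omega$, and $\omega\alpha'+n$ is followed by an $n$-element chain. The direct sum $A\oplus B$ of posets is their disjoint union in which elements of $A$ are incomparable to elements of $B$. *)

theory Defs
  imports Main "HOL-Library.Countable_Set"
begin

text \<open>Order types are represented by (reflexive) linear order relations;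
the carrier of a relation r is Field r.\<close>

definition is_linorder :: "'a rel \<Rightarrow> bool" where
  "is_linorder r \<longleftrightarrow> linear_order_on (Field r) r"

definition ord_iso :: "'a rel \<Rightarrow> 'b rel \<Rightarrow> ('a \<Rightarrow> 'b) \<Rightarrow> bool" where
  "ord_iso r s f \<longleftrightarrow> bij_betw f (Field r) (Field s) \<and>
     (\<forall>x\<in>Field r. \<forall>y\<in>Field r. (x, y) \<in> r \<longleftrightarrow> (f x, f y) \<in> s)"

definition omega_ord :: "nat rel" where
  "omega_ord = {(m, n). m \<le> n}"

text \<open>omega * b: the ordered sum of b copies of omega (lexicographic, b major).\<close>
definition omega_times :: "'c rel \<Rightarrow> ('c \<times> nat) rel" where
  "omega_times b = {((x, i), (y, j)). (x, y) \<in> b \<and> (x \<noteq> y \<or> i \<le> j)}"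

definition omega_times_plus :: "'c rel \<Rightarrow> nat \<Rightarrow> (('c \<times> nat) + nat) rel" where
  "omega_times_plus b n =
     {(Inl u, Inl v) | u v. (u, v) \<in> omega_times b}
   \<union> {(Inl u, Inr k) | u k. u \<in> Field (omega_times b) \<and> k < n}
   \<union> {(Inr k, Inr l) | k l. k \<le> l \<and> l < n}"

definition sierpinskisation :: "'a rel \<Rightarrow> 'b rel \<Rightarrow> bool" where
  "sierpinskisation P a \<longleftrightarrow>
     (\<exists>L1 L2. is_linorder L1 \<and> is_linorder L2 \<and>
        Field L1 = Field P \<and> Field L2 = Field P \<and> P = L1 \<inter> L2 \<and>
        (\<exists>f. ord_iso L1 a f) \<and> (\<exists>g. ord_iso L2 omega_ord g))"

end

theory Submission imports Defs "HOL-Library.Infinite_Set" begin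

lemma linorder_refl: "is_linorder r \<Longrightarrow> refl_on (Field r) r"
  by (simp add: is_linorder_def linear_order_on_def partial_order_on_def preorder_on_def)

lemma Field_Restr_refl: "refl_on (Field r) r \<Longrightarrow> A \<subseteq> Field r \<Longrightarrow> Field (Restr r A) = A"
  unfolding Field_def refl_on_def by blast

lemma linorder_Restr: "is_linorder r \<Longrightarrow> A \<subseteq> Field r \<Longrightarrow> is_linorder (Restr r A)"
  unfolding is_linorder_def
  apply (subst Field_Restr_refl, simp add: linear_order_on_def partial_order_on_def preorder_on_def, assumption)
  unfolding linear_order_on_def partial_order_on_def preorder_on_def refl_on_def trans_def antisym_def total_on_def
  by blast

lemma ord_iso_inv: "ord_iso r s f \<Longrightarrow> ord_iso s r (inv_into (Field r) f)"
  unfolding ord_iso_def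
  by (smt (verit, best) bij_betw_imp_surj_on bij_betw_inv_into bij_betw_inv_into_right inv_into_into)

lemma ord_iso_comp: "ord_iso r s f \<Longrightarrow> ord_iso s t g \<Longrightarrow> ord_iso r t (g \<circ> f)"
  unfolding ord_iso_def
  by (metis (no_types, lifting) bij_betw_apply bij_betw_trans comp_apply)

lemma ord_iso_restr:
  assumes "ord_iso r s f" "refl_on (Field r) r" "A \<subseteq> Field r"
  shows "ord_iso (Restr r A) (Restr s (f`A)) f"
proof -
  have fa: "Field (Restr r A) = A" using assms Field_Restr_refl by blast
  have fb: "Field (Restr s (f`A)) = f`A"
  proof
    show "Field (Restr s (f`A)) \<subseteq> f`A" unfolding Field_def by auto
    show "f`A \<subseteq> Field (Restr s (f`A))"
    proof
      fix y assume "y \<in> f`A" then obtain x where x: "x \<in> A" "y = f x" by auto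
      have xr: "x \<in> Field r" using assms(3) x(1) by blast
      hence "(x,x) \<in> r" using assms(2) unfolding refl_on_def by blast
      moreover have "\<forall>u\<in>Field r. \<forall>v\<in>Field r. (u,v) \<in> r \<longleftrightarrow> (f u, f v) \<in> s"
        using assms(1) unfolding ord_iso_def by blast
      ultimately have "(y,y) \<in> s" using xr x(2) by blast
      thus "y \<in> Field (Restr s (f`A))" using x unfolding Field_def by blast
    qed
  qed
  have inj: "inj_on f A" using assms(1,3) unfolding ord_iso_def bij_betw_def by (meson inj_on_subset)
  show ?thesis unfolding ord_iso_def fa fb
  proof (intro conjI ballI)
    show "bij_betw f A (f`A)" using inj by (simp add: bij_betw_imageI)
    fix x y assume "x \<in> A" "y \<in> A"
    thus "((x, y) \<in> Restr r A) = ((f x, f y) \<in> Restr s (f ` A))"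
      using assms(1,3) unfolding ord_iso_def by blast
  qed
qed

lemma omega_infinite_subset:
  fixes S :: "nat set" assumes "infinite S"
  shows "ord_iso (Restr omega_ord S) omega_ord (inv_into (Field omega_ord) (enumerate S))"
proof -
  have "ord_iso omega_ord (Restr omega_ord S) (enumerate S)"
  proof -
    have f1: "Field omega_ord = UNIV" unfolding omega_ord_def Field_def by auto
    have f2: "Field (Restr omega_ord S) = S" unfolding omega_ord_def Field_def by auto
    show ?thesis unfolding ord_iso_def f1 f2
      using bij_enumerate[OF assms] enumerate_in_set[OF assms] assms
      by (auto simp: omega_ord_def)
  qed
  thus ?thesis using ord_iso_inv by blast
qed

lemma Field_omega_times: "refl_on (Field b) b \<Longrightarrow> Field (omega_times b) = Field b \<times> UNIV"
  unfolding omega_times_def Field_def refl_on_def by auto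

lemma Field_otp: "refl_on (Field b) b \<Longrightarrow>
  Field (omega_times_plus b n) = Inl ` (Field b \<times> (UNIV::nat set)) \<union> Inr ` {..<n}"
proof -
  assume r: "refl_on (Field b) b"
  have fo: "Field (omega_times b) = Field b \<times> UNIV" using Field_omega_times[OF r] .
  have ro: "\<And>u. u \<in> Field (omega_times b) \<Longrightarrow> (u,u) \<in> omega_times b"
    using r unfolding fo by (auto simp: omega_times_def refl_on_def)
  show ?thesis
  proof
    show "Field (omega_times_plus b n) \<subseteq> Inl ` (Field b \<times> (UNIV::nat set)) \<union> Inr ` {..<n}"
    proof
      fix z assume "z \<in> Field (omega_times_plus b n)"
      have d: "\<And>u v. (u,v) \<in> omega_times b \<Longrightarrow> u \<in> Field b \<times> UNIV \<and> v \<in> Field b \<times> UNIV"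
        using fo by (metis FieldI1 FieldI2)
      have d2: "\<And>u. u \<in> Field (omega_times b) \<Longrightarrow> u \<in> Field b \<times> UNIV" using fo by simp
      from \<open>z \<in> Field (omega_times_plus b n)\<close> obtain w where
        "(z,w) \<in> omega_times_plus b n \<or> (w,z) \<in> omega_times_plus b n" unfolding Field_def by blast
      then show "z \<in> Inl ` (Field b \<times> (UNIV::nat set)) \<union> Inr ` {..<n}"
        unfolding omega_times_plus_def using d d2 by fastforce
    qed
    show "Inl ` (Field b \<times> (UNIV::nat set)) \<union> Inr ` {..<n} \<subseteq> Field (omega_times_plus b n)"
    proof
      fix z assume "z \<in> Inl ` (Field b \<times> (UNIV::nat set)) \<union> Inr ` {..<n}"
      then consider u where "u \<in> Field (omega_times b)" "z = Inl u" | k where "k < n" "z = Inr k"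
        using fo by auto
      then show "z \<in> Field (omega_times_plus b n)"
      proof cases
        case 1 then have "(z,z) \<in> omega_times_plus b n" using ro unfolding omega_times_plus_def by blast
        then show ?thesis by (auto intro: FieldI1)
      next
        case 2 then have "(z,z) \<in> omega_times_plus b n" unfolding omega_times_plus_def by blast
        then show ?thesis by (auto intro: FieldI1)
      qed
    qed
  qed
qed

theorem lemma2p7:
  fixes a :: "'b rel" and P :: "'a rel" and b :: "'c rel" and n :: nat
  assumes "is_linorder a" and "countable (Field a)" and "infinite (Field a)"
    and "sierpinskisation P a"
    and "is_linorder b" and "\<exists>h. ord_iso a (omega_times_plus b n) h"
  shows "\<exists>A B. A \<subseteq> Field P \<and> B \<subseteq> Field P \<and> A \<inter> B = {} \<and>
           finite B \<and> card B = n \<and>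
           (\<forall>x\<in>A. \<forall>y\<in>B. (x, y) \<notin> P \<and> (y, x) \<notin> P) \<and>
           sierpinskisation (Restr P A) (omega_times b)"
proof -
  obtain L1 L2 f g where L1: "is_linorder L1" and L2: "is_linorder L2"
    and FL1: "Field L1 = Field P" and FL2: "Field L2 = Field P" and PL: "P = L1 \<inter> L2"
    and f: "ord_iso L1 a f" and g: "ord_iso L2 omega_ord g"
    using assms(4) unfolding sierpinskisation_def by blast
  obtain h where h: "ord_iso a (omega_times_plus b n) h" using assms(6) by blast
  define Ot where "Ot = omega_times_plus b n"
  define \<phi> where "\<phi> = h \<circ> f"
  have phi: "ord_iso L1 Ot \<phi>" using ord_iso_comp[OF f h] unfolding Ot_def \<phi>_def .
  have rb: "refl_on (Field b) b" using linorder_refl[OF assms(5)] .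
  have FO: "Field Ot = Inl ` (Field b \<times> UNIV) \<union> Inr ` {..<n}" unfolding Ot_def using Field_otp[OF rb] .
  have phibij: "bij_betw \<phi> (Field P) (Field Ot)" using phi FL1 unfolding ord_iso_def by simp
  have phiord: "\<And>x y. x \<in> Field P \<Longrightarrow> y \<in> Field P \<Longrightarrow> (x,y) \<in> L1 \<longleftrightarrow> (\<phi> x, \<phi> y) \<in> Ot"
    using phi FL1 unfolding ord_iso_def by simp
  have Fom: "Field omega_ord = UNIV" unfolding omega_ord_def Field_def by auto
  have gbij: "bij_betw g (Field P) UNIV" using g FL2 Fom unfolding ord_iso_def by auto
  have gord: "\<And>x y. x \<in> Field P \<Longrightarrow> y \<in> Field P \<Longrightarrow> (x,y) \<in> L2 \<longleftrightarrow> g x \<le> g y"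
    using g FL2 unfolding ord_iso_def omega_ord_def by simp
  have bne: "Field b \<noteq> {}"
  proof
    assume "Field b = {}"
    hence "finite (Field Ot)" using FO by simp
    moreover have "bij_betw h (Field a) (Field Ot)" using h unfolding Ot_def ord_iso_def by simp
    ultimately show False using assms(3) bij_betw_finite by blast
  qed
  define B where "B = {p \<in> Field P. \<exists>k. \<phi> p = Inr k}"
  have phiB: "\<phi> ` B = Inr ` {..<n}"
  proof
    show "\<phi> ` B \<subseteq> Inr ` {..<n}"
    proof
      fix z assume "z \<in> \<phi> ` B"
      then obtain p k where p: "p \<in> Field P" "z = Inr k" "\<phi> p = Inr k" unfolding B_def by auto
      have "\<phi> p \<in> Field Ot" using phibij p(1) unfolding bij_betw_def by auto
      thus "z \<in> Inr ` {..<n}" using FO p by auto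
    qed
    show "Inr ` {..<n} \<subseteq> \<phi> ` B"
    proof
      fix z assume z: "z \<in> (Inr ` {..<n} :: ('c \<times> nat + nat) set)"
      then have "z \<in> Field Ot" using FO by auto
      then obtain p where "p \<in> Field P" "\<phi> p = z" using phibij unfolding bij_betw_def by (metis imageE)
      then show "z \<in> \<phi> ` B" using z unfolding B_def by auto
    qed
  qed
  have injB: "inj_on \<phi> B" using phibij unfolding bij_betw_def B_def by (auto intro: inj_on_subset)
  have finB: "finite B" using finite_imageD[OF _ injB] phiB by simp
  have cardB: "card B = n" using card_image[OF injB] phiB by (simp add: card_image)
  obtain m where m: "\<forall>p\<in>B. g p \<le> m"
  proof -
    have "finite (g ` B)" using finB by simp
    then obtain m where "\<forall>x\<in>g ` B. x \<le> m" using finite_nat_set_iff_bounded_le by blast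
    thus ?thesis using that by blast
  qed
  define Q where "Q = {p \<in> Field P. g p \<le> m}"
  have finQ: "finite Q"
  proof -
    have "inj_on g Q" using gbij unfolding bij_betw_def Q_def by (auto intro: inj_on_subset)
    moreover have "g ` Q \<subseteq> {..m}" unfolding Q_def by auto
    ultimately show ?thesis by (meson finite_atMost finite_imageD finite_subset)
  qed
  define I where "I = {i. \<exists>p\<in>Q. \<exists>x. \<phi> p = Inl (x,i)}"
  have "I \<subseteq> (\<lambda>p. snd (projl (\<phi> p))) ` Q" unfolding I_def by force
  moreover have "finite ((\<lambda>p. snd (projl (\<phi> p))) ` Q)" using finQ by simp
  ultimately have "finite I" by (rule finite_subset)
  then obtain N where N: "\<forall>i\<in>I. i < N" using finite_nat_set_iff_bounded by blast
  define A where "A = {p \<in> Field P. \<exists>x i. \<phi> p = Inl (x,i) \<and> N \<le> i}"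
  have Am: "\<And>p. p \<in> A \<Longrightarrow> m < g p"
  proof (rule ccontr)
    fix p assume p: "p \<in> A" "\<not> m < g p"
    then obtain x i where xi: "\<phi> p = Inl (x,i)" "N \<le> i" unfolding A_def by auto
    have "p \<in> Q" using p unfolding Q_def A_def by auto
    hence "i \<in> I" unfolding I_def using xi(1) by blast
    hence "i < N" using N by blast
    thus False using xi(2) by linarith
  qed
  have AF: "A \<subseteq> Field P" "B \<subseteq> Field P" "A \<inter> B = {}" unfolding A_def B_def by auto
  have inc: "\<forall>x\<in>A. \<forall>y\<in>B. (x, y) \<notin> P \<and> (y, x) \<notin> P"
  proof (intro ballI conjI)
    fix x y assume x: "x \<in> A" and y: "y \<in> B"
    have xy: "x \<in> Field P" "y \<in> Field P" using x y AF by auto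
    show "(x,y) \<notin> P"
    proof
      assume "(x,y) \<in> P"
      hence "g x \<le> g y" using gord xy PL by blast
      moreover have "g y \<le> m" using m y by blast
      ultimately show False using Am[OF x] by linarith
    qed
    show "(y,x) \<notin> P"
    proof
      assume "(y,x) \<in> P"
      hence "(\<phi> y, \<phi> x) \<in> Ot" using phiord xy PL by blast
      moreover obtain k where "\<phi> y = Inr k" using y B_def by auto
      moreover obtain u where "\<phi> x = Inl u" using x A_def by auto
      ultimately show False unfolding Ot_def omega_times_plus_def by auto
    qed
  qed
  define \<psi> where "\<psi> p = (fst (projl (\<phi> p)), snd (projl (\<phi> p)) - N)" for p
  have psibij: "bij_betw \<psi> A (Field b \<times> UNIV)"
    unfolding bij_betw_def
  proof
    show "inj_on \<psi> A"
    proof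
      fix p q assume p: "p \<in> A" and q: "q \<in> A" and e: "\<psi> p = \<psi> q"
      obtain x i where pi: "\<phi> p = Inl (x,i)" "N \<le> i" using p A_def by auto
      obtain y j where qj: "\<phi> q = Inl (y,j)" "N \<le> j" using q A_def by auto
      have "x = y" "i = j" using e pi qj unfolding \<psi>_def by auto
      hence "\<phi> p = \<phi> q" using pi qj by simp
      thus "p = q" using phibij p q AF unfolding bij_betw_def inj_on_def by blast
    qed
    show "\<psi> ` A = Field b \<times> UNIV"
    proof
      show "\<psi> ` A \<subseteq> Field b \<times> UNIV"
      proof
        fix z assume "z \<in> \<psi> ` A"
        then obtain p where p: "p \<in> A" "z = \<psi> p" by auto
        obtain x i where pi: "\<phi> p = Inl (x,i)" using p A_def by auto
        have "p \<in> Field P" using p AF by blast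
        hence "\<phi> p \<in> Field Ot" using bij_betw_apply[OF phibij] by blast
        hence "x \<in> Field b" using pi FO by auto
        thus "z \<in> Field b \<times> UNIV" using p pi unfolding \<psi>_def by simp
      qed
      show "Field b \<times> UNIV \<subseteq> \<psi> ` A"
      proof
        fix z assume "z \<in> Field b \<times> (UNIV :: nat set)"
        then obtain x k where z: "z = (x,k)" "x \<in> Field b" by auto
        hence "Inl (x, k + N) \<in> Field Ot" using FO by auto
        then obtain p where p: "p \<in> Field P" "\<phi> p = Inl (x, k+N)"
          using phibij unfolding bij_betw_def by (metis imageE)
        hence "p \<in> A" unfolding A_def by auto
        moreover have "\<psi> p = z" using p z unfolding \<psi>_def by simp
        ultimately show "z \<in> \<psi> ` A" by blast
      qed
    qed
  qed
  have rP: "refl_on (Field P) P"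
    using linorder_refl[OF L1] linorder_refl[OF L2] FL1 FL2 PL unfolding refl_on_def by auto
  have sier: "sierpinskisation (Restr P A) (omega_times b)"
    unfolding sierpinskisation_def
  proof (intro exI conjI)
    show "is_linorder (Restr L1 A)" using linorder_Restr[OF L1] AF FL1 by simp
    show "is_linorder (Restr L2 A)" using linorder_Restr[OF L2] AF FL2 by simp
    show "Field (Restr L1 A) = Field (Restr P A)"
      using Field_Restr_refl[OF linorder_refl[OF L1]] Field_Restr_refl[OF rP] AF FL1 by simp
    show "Field (Restr L2 A) = Field (Restr P A)"
      using Field_Restr_refl[OF linorder_refl[OF L2]] Field_Restr_refl[OF rP] AF FL2 by simp
    show "Restr P A = Restr L1 A \<inter> Restr L2 A" using PL by blast
    show "ord_iso (Restr L1 A) (omega_times b) \<psi>"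
      unfolding ord_iso_def
    proof (intro conjI ballI)
      have fa: "Field (Restr L1 A) = A" using Field_Restr_refl[OF linorder_refl[OF L1]] AF FL1 by simp
      show "bij_betw \<psi> (Field (Restr L1 A)) (Field (omega_times b))"
        using psibij fa Field_omega_times[OF rb] by simp
      fix p q assume "p \<in> Field (Restr L1 A)" "q \<in> Field (Restr L1 A)"
      hence p: "p \<in> A" and q: "q \<in> A" using fa by auto
      obtain x i where pi: "\<phi> p = Inl (x,i)" "N \<le> i" using p A_def by auto
      obtain y j where qj: "\<phi> q = Inl (y,j)" "N \<le> j" using q A_def by auto
      have "(p,q) \<in> Restr L1 A \<longleftrightarrow> (\<phi> p, \<phi> q) \<in> Ot" using phiord p q AF by auto
      also have "\<dots> \<longleftrightarrow> ((x,i),(y,j)) \<in> omega_times b"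
        unfolding Ot_def omega_times_plus_def pi qj by auto
      also have "\<dots> \<longleftrightarrow> (\<psi> p, \<psi> q) \<in> omega_times b"
        unfolding \<psi>_def pi qj omega_times_def using pi(2) qj(2) by auto
      finally show "((p, q) \<in> Restr L1 A) = ((\<psi> p, \<psi> q) \<in> omega_times b)" .
    qed
    have infA: "infinite A"
    proof
      assume "finite A"
      hence "finite (Field b \<times> (UNIV::nat set))" using psibij bij_betw_finite by blast
      thus False using bne by (simp add: finite_cartesian_product_iff)
    qed
    have injg: "inj_on g A" using gbij AF unfolding bij_betw_def by (auto intro: inj_on_subset)
    have infgA: "infinite (g ` A)" using infA injg finite_imageD by blast
    have "ord_iso (Restr L2 A) (Restr omega_ord (g ` A)) g"
      using ord_iso_restr[OF g linorder_refl[OF L2]] AF FL2 by simp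
    moreover note omega_infinite_subset[OF infgA]
    ultimately show "ord_iso (Restr L2 A) omega_ord (inv_into (Field omega_ord) (enumerate (g ` A)) \<circ> g)"
      by (rule ord_iso_comp)
  qed
  show ?thesis using AF finB cardB inc sier by blast
qed

end
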